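(* Let $n\ge 1$ and let $M$ be an $n\times n$ matrix with entries in $\mathbb{Z}_2$. Then $R(M)\le n-1$.
   Context: For an $n\times n$ matrix $M$ with entries in $\mathbb{Z}_2$, $R(M)$ denotes the minimal rank (over $\mathbb{Z}_2$) among all matrices obtained from $M$ by changing some (possibly none) of the entries on the main diagonal of $M$, i.e. $R(M)=\min\{\operatorname{rk}(M+D): D \text{ an } n\times n \text{ diagonal matrix over } \mathbb{Z}_2\}$. *)

theory Defs
  imports "HOL-Analysis.Analysis" "HOL-Library.Z2"
begin

definition is_diag :: "'a::zero^'n^'n \<Rightarrow> bool" where
  "is_diag D \<longleftrightarrow> (\<forall>i j. i \<noteq> j \<longrightarrow> D $ i $ j = 0)"

definition minrank_diag :: "bit^'n^'n \<Rightarrow> nat" where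
  "minrank_diag M = Min {rank (M + D) | D. is_diag D}"

end

theory Submission
  imports Defs
begin

lemma bit_double: "(x::bit) + x = 0"
  by (cases x) simp_all

lemma row_eq: "row i A = A $ i"
  by (simp add: row_def vec_eq_iff)

theorem mainTheorem6:
  fixes M :: "bit^'n^'n"
  shows "minrank_diag M \<le> CARD('n) - 1"
proof -
  define D :: "bit^'n^'n" where "D = (\<chi> i j. if i = j then (\<Sum>k\<in>UNIV. M$k$i) else 0)"
  define A where "A = M + D"
  have dg: "is_diag D" unfolding is_diag_def D_def by simp
  have colsum: "(\<Sum>k\<in>UNIV. A $ k) = 0"
  unfolding vec_eq_iff proof
    fix j
    have "(\<Sum>k\<in>UNIV. A $ k) $ j = (\<Sum>k\<in>UNIV. A $ k $ j)" by (simp add: sum_component)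
    also have "\<dots> = (\<Sum>k\<in>UNIV. M $ k $ j) + (\<Sum>k\<in>UNIV. D $ k $ j)"
      unfolding A_def vector_add_component by (rule sum.distrib)
    also have "(\<Sum>k\<in>UNIV. D $ k $ j) = (\<Sum>k\<in>UNIV. M $ k $ j)"
      unfolding D_def by (simp add: sum.delta)
    finally show "(\<Sum>k\<in>UNIV. A $ k) $ j = (0::bit^'n) $ j" by (simp add: bit_double)
  qed
  obtain i0 :: 'n where True by blast
  define S where "S = (\<lambda>k. A $ k) ` (UNIV - {i0})"
  have fS: "finite S" unfolding S_def by simp
  have cS: "card S \<le> CARD('n) - 1"
    unfolding S_def using card_image_le[of "UNIV - {i0}" "\<lambda>k. A $ k"]
    by (simp add: card_Diff_singleton)
  have "A $ i0 = - (\<Sum>k\<in>UNIV - {i0}. A $ k)"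
    using colsum sum.remove[of UNIV i0 "\<lambda>k. A $ k"] by (simp add: eq_neg_iff_add_eq_0 add.commute)
  also have "\<dots> \<in> vec.span S"
    unfolding S_def
    by (intro vec.span_neg vec.span_sum) (auto intro: vec.span_base)
  finally have i0s: "A $ i0 \<in> vec.span S" .
  have "rows A \<subseteq> vec.span S"
  proof
    fix r assume "r \<in> rows A"
    then obtain i where r: "r = A $ i" by (auto simp: rows_def row_eq)
    show "r \<in> vec.span S"
    proof (cases "i = i0")
      case True thus ?thesis using i0s r by simp
    next
      case False thus ?thesis using r unfolding S_def by (auto intro: vec.span_base)
    qed
  qed
  hence "rank A \<le> card S" unfolding row_rank_def_gen using vec.dim_le_card fS by blast
  hence rA: "rank A \<le> CARD('n) - 1" using cS by simp
  have "minrank_diag M \<le> rank A"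
    unfolding minrank_diag_def
  proof (rule Min_le)
    have "{rank (M + D) |D. is_diag D} \<subseteq> {..CARD('n)}"
    proof
      fix x assume "x \<in> {rank (M + D) |D. is_diag D}"
      then obtain B :: "bit^'n^'n" where x: "x = rank B" by blast
      have re: "rows B = (\<lambda>i. row i B) ` UNIV" unfolding rows_def by auto
      have fr: "finite (rows B)" unfolding re by simp
      from re have "card (rows B) \<le> CARD('n)" using card_image_le[of UNIV "\<lambda>i. row i B"] by simp
      moreover have "rank B \<le> card (rows B)"
        unfolding row_rank_def_gen using vec.dim_le_card[OF vec.span_superset fr] .
      ultimately show "x \<in> {..CARD('n)}" using x by simp
    qed
    thus "finite {rank (M + D) |D. is_diag D}" by (rule finite_subset) simp
    show "rank A \<in> {rank (M + D) |D. is_diag D}" using dg A_def by blast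
  qed
  thus ?thesis using rA by simp
qed

end
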